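(* For every real $t>0$ and every $\sigma\in(\frac12,2)$, \[ \frac{1}{2\pi i}\int_{-\infty-i\sigma}^{+\infty-i\sigma}\Bigl(\frac{t}{2\pi}\Bigr)^{\frac{ix}{2}}\zeta\bigl(\tfrac12+i(t+x)\bigr)\,\frac{\pi}{2\sinh\frac{\pi x}{2}}\,dx=\sum_{n=1}^\infty \frac{1}{n^{\frac12+it}}\,\frac{t}{2\pi n^2+t}. \] In particular $G(t)=\sum_{n\ge1} n^{-\frac12-it}\,\frac{t}{2\pi n^2+t}$.
   Context: $\zeta$ is the Riemann zeta function; $(t/2\pi)^{ix/2}=\exp(\frac{ix}{2}\log\frac{t}{2\pi})$. $G(t)$ denotes the integral on the left-hand side (integration along the horizontal line $\Im x=-\sigma$). *)

theory Defs
  imports "HOL-Analysis.Analysis"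
begin

text \<open>This is the Riemann zeta
  function on the half-plane Re s > 1, which is the only region where it is used
  in the main statement (there the argument has real part 1/2 + sigma > 1).\<close>
definition riemann_zeta :: "complex \<Rightarrow> complex" where
  "riemann_zeta s = (\<Sum>n. 1 / (of_nat (Suc n)) powr s)"

definition G_integrand :: "real \<Rightarrow> complex \<Rightarrow> complex" where
  "G_integrand t x =
     exp (\<i> * x / 2 * of_real (ln (t / (2 * pi))))
     * riemann_zeta (1/2 + \<i> * (of_real t + x))
     * (of_real pi / (2 * sinh (of_real pi * x / 2)))"

end

theory Submission
  imports Defs "HOL-Complex_Analysis.Complex_Analysis" "HOL-Real_Asymp.Real_Asymp"
begin


definition Dk :: "complex \<Rightarrow> complex" where
  "Dk z = exp (of_real pi * z / 2) - exp (-(of_real pi * z / 2))"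

definition Fk :: "real \<Rightarrow> complex \<Rightarrow> complex" where
  "Fk a z = exp (\<i> * of_real a * z) * of_real pi / Dk z"

lemma Dk_zero:
  assumes "Dk z = 0" shows "Re z = 0 \<and> (\<exists>n::int. Im z = 2 * of_int n)"
proof -
  have "exp (of_real pi * z / 2) = exp (-(of_real pi * z / 2))" using assms by (simp add: Dk_def)
  hence "exp (of_real pi * z / 2) * exp (of_real pi * z / 2) = exp (-(of_real pi * z / 2)) * exp (of_real pi * z / 2)" by simp
  hence "exp (of_real pi * z) = 1" by (simp flip: exp_add add: mult.commute)
  then obtain n::int where "Re (of_real pi * z) = 0" "Im (of_real pi * z) = of_int (2*n) * pi" 
    by (auto simp: exp_eq_1)
  thus ?thesis by auto
qed

lemma Dk_shift: "Dk (z - 2*\<i>) = - Dk z"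
proof -
  have e: "exp (of_real pi * \<i>) = -1" by (rule exp_pi_i)
  have "of_real pi * (z - 2*\<i>) / 2 = of_real pi * z / 2 + (-(of_real pi * \<i>))" by (simp add: field_simps)
  hence "exp (of_real pi * (z - 2*\<i>) / 2) = exp (of_real pi * z / 2) * exp (-(of_real pi * \<i>))"
    by (metis exp_add)
  also have "exp (-(of_real pi * \<i>)) = -1" by (simp add: exp_minus e)
  finally have 1: "exp (of_real pi * (z - 2*\<i>) / 2) = - exp (of_real pi * z / 2)" by simp
  have "-(of_real pi * (z - 2*\<i>) / 2) = (-(of_real pi * z / 2)) + of_real pi * \<i>" by (simp add: field_simps)
  hence "exp (-(of_real pi * (z - 2*\<i>) / 2)) = exp (-(of_real pi * z / 2)) * exp (of_real pi * \<i>)"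
    by (metis exp_add)
  hence 2: "exp (-(of_real pi * (z - 2*\<i>) / 2)) = - exp (-(of_real pi * z / 2))" by (simp add: e)
  show ?thesis unfolding Dk_def 1 2 by simp
qed

lemma Fk_shift: "Fk a (z - 2*\<i>) = - exp (2 * of_real a) * Fk a z"
proof -
  have "exp (\<i> * of_real a * (z - 2*\<i>)) = exp (\<i> * of_real a * z) * exp (2 * of_real a)"
    by (simp flip: exp_add add: algebra_simps)
  thus ?thesis unfolding Fk_def Dk_shift by (simp add: field_simps)
qed

lemma norm_exp_ia: "norm (exp (\<i> * of_real a * Complex u y)) = exp (- a * y)"
  by simp

lemma Dk_lower1: "norm (Dk (Complex u y)) \<ge> exp (pi * \<bar>u\<bar> / 2) - exp (- (pi * \<bar>u\<bar> / 2))"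
proof -
  have n1: "norm (exp (of_real pi * Complex u y / 2)) = exp (pi * u / 2)" by simp
  have n2: "norm (exp (-(of_real pi * Complex u y / 2))) = exp (-(pi * u / 2))" by simp
  have "norm (Dk (Complex u y)) \<ge> \<bar>norm (exp (of_real pi * Complex u y / 2)) - norm (exp (-(of_real pi * Complex u y / 2)))\<bar>"
    unfolding Dk_def by (rule norm_triangle_ineq3)
  moreover have "\<bar>exp (pi * u / 2) - exp (-(pi * u / 2))\<bar> = exp (pi * \<bar>u\<bar> / 2) - exp (- (pi * \<bar>u\<bar> / 2))"
    by (cases "u \<ge> 0") (auto simp: mult_nonneg_nonpos)
  ultimately show ?thesis using n1 n2 by simp
qed

lemma Dk_lower2: "norm (Dk (Complex u y)) \<ge> exp (pi * \<bar>u\<bar> / 2) * \<bar>sin (pi * y / 2)\<bar>"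
proof -
  have "Im (Dk (Complex u y)) = sin (pi * y / 2) * (exp (pi * u / 2) + exp (-(pi * u / 2)))"
    unfolding Dk_def by (simp add: Im_exp algebra_simps)
  hence "norm (Dk (Complex u y)) \<ge> \<bar>sin (pi * y / 2)\<bar> * (exp (pi * u / 2) + exp (-(pi * u / 2)))"
    using abs_Im_le_cmod[of "Dk (Complex u y)"] by (simp add: abs_mult)
  moreover have "exp (pi * u / 2) + exp (-(pi * u / 2)) \<ge> exp (pi * \<bar>u\<bar> / 2)"
    by (cases "u \<ge> 0") (auto simp: add_nonneg_pos)
  ultimately show ?thesis 
    by (smt (verit, best) abs_ge_zero mult.commute mult_left_mono)
qed


definition Sstrip :: "complex set" where "Sstrip = {z. -4 < Im z \<and> Im z < 0}"

lemma open_Sstrip: "open Sstrip"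
  unfolding Sstrip_def by (intro open_Collect_conj open_halfspace_Im_lt open_halfspace_Im_gt)

lemma Dk_nz: assumes "z \<in> Sstrip - {-2*\<i>}" shows "Dk z \<noteq> 0"
proof
  assume "Dk z = 0"
  from Dk_zero[OF this] obtain n::int where n: "Re z = 0" "Im z = 2 * of_int n" by auto
  have "-4 < 2 * real_of_int n" "2 * real_of_int n < 0" using assms n by (auto simp: Sstrip_def)
  hence "n = -1" by linarith
  hence "z = -2*\<i>" using n by (simp add: complex_eq_iff)
  thus False using assms by simp
qed

lemma Fk_holo: "Fk a holomorphic_on (Sstrip - {-2*\<i>})"
proof -
  have "(\<lambda>z. exp (\<i> * of_real a * z) * of_real pi / Dk z) holomorphic_on (Sstrip - {-2*\<i>})"
    unfolding Dk_def using Dk_nz unfolding Dk_def by (intro holomorphic_intros) auto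
  thus ?thesis unfolding Fk_def[abs_def] Dk_def .
qed

lemma Dk_deriv: "(Dk has_field_derivative (of_real pi / 2) * (exp (of_real pi * z / 2) + exp (-(of_real pi * z / 2)))) (at z)"
  unfolding Dk_def[abs_def] by (auto intro!: derivative_eq_intros simp: algebra_simps)

lemma Fk_residue: "residue (Fk a) (-2*\<i>) = - exp (2 * of_real a)"
proof (rule residue_simple'[OF open_Sstrip _ Fk_holo])
  show "-2*\<i> \<in> Sstrip" by (simp add: Sstrip_def)
  let ?z0 = "-2*\<i> :: complex"
  have e1: "exp (of_real pi * ?z0 / 2) = -1"
  proof -
    have "of_real pi * ?z0 / 2 = -(of_real pi * \<i>)" by simp
    thus ?thesis by (simp add: exp_minus exp_pi_i)
  qed
  have e2: "exp (-(of_real pi * ?z0 / 2)) = -1"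
  proof -
    have "-(of_real pi * ?z0 / 2) = of_real pi * \<i>" by simp
    thus ?thesis by (simp add: exp_pi_i)
  qed
  have D0: "Dk ?z0 = 0" using Dk_shift[of 0] by (simp add: Dk_def)
  have "((\<lambda>w. (Dk w - Dk ?z0) / (w - ?z0)) \<longlongrightarrow> (of_real pi / 2) * (exp (of_real pi * ?z0 / 2) + exp (-(of_real pi * ?z0 / 2)))) (at ?z0)"
    using Dk_deriv[of ?z0] unfolding has_field_derivative_iff .
  hence L1: "((\<lambda>w. Dk w / (w - ?z0)) \<longlongrightarrow> - of_real pi) (at ?z0)" using D0 e1 e2 by simp
  have L2: "((\<lambda>w. exp (\<i> * of_real a * w) * of_real pi) \<longlongrightarrow> exp (\<i> * of_real a * ?z0) * of_real pi) (at ?z0)"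
    by (intro tendsto_intros)
  have T: "((\<lambda>w. exp (\<i> * of_real a * w) * of_real pi / (Dk w / (w - ?z0))) \<longlongrightarrow> exp (\<i> * of_real a * ?z0) * of_real pi / (- of_real pi)) (at ?z0)"
    by (rule tendsto_divide[OF L2 L1]) simp
  have V: "exp (\<i> * of_real a * ?z0) * of_real pi / (- of_real pi) = - exp (2 * of_real a)"
    by (simp add: field_simps)
  have E: "eventually (\<lambda>w. exp (\<i> * of_real a * w) * of_real pi / (Dk w / (w - ?z0)) = Fk a w * (w - ?z0)) (at ?z0)"
    by (intro always_eventually) (simp add: Fk_def)
  show "((\<lambda>w. Fk a w * (w - ?z0)) \<longlongrightarrow> - exp (2 * of_real a)) (at ?z0)"
    using Lim_transform_eventually[OF T E] unfolding V .
qed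


lemma connected_Sstrip: "connected Sstrip"
proof -
  have "Sstrip = {z. Im z > -4} \<inter> {z. Im z < 0}" by (auto simp: Sstrip_def)
  hence "convex Sstrip" using convex_halfspace_Im_gt convex_halfspace_Im_lt convex_Int by metis
  thus ?thesis by (rule convex_connected)
qed

lemma Fk_cont: "continuous_on (Sstrip - {-2*\<i>}) (Fk a)"
  by (rule holomorphic_on_imp_continuous_on[OF Fk_holo])

lemma rect_sum:
  fixes R \<sigma> :: real
  assumes "R > 0" "0 < \<sigma>" "\<sigma> < 2"
  defines "a1 \<equiv> Complex (-R) (-\<sigma>-2)" and "a2 \<equiv> Complex R (-\<sigma>-2)"
      and "a3 \<equiv> Complex R (-\<sigma>)" and "a4 \<equiv> Complex (-R) (-\<sigma>)"
  shows "contour_integral (linepath a1 a2) (Fk a) + contour_integral (linepath a2 a3) (Fk a)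
       + contour_integral (linepath a3 a4) (Fk a) + contour_integral (linepath a4 a1) (Fk a)
       = 2 * pi * \<i> * (- exp (2 * of_real a))"
proof -
  have le: "Re a1 \<le> Re a3" "Im a1 \<le> Im a3" using assms by (auto simp: a1_def a3_def)
  have rp: "rectpath a1 a3 = linepath a1 a2 +++ linepath a2 a3 +++ linepath a3 a4 +++ linepath a4 a1"
    by (simp add: rectpath_def Let_def a1_def a2_def a3_def a4_def)
  have pim: "path_image (rectpath a1 a3) = closed_segment a1 a2 \<union> closed_segment a2 a3 \<union> closed_segment a3 a4 \<union> closed_segment a4 a1"
    unfolding rp by (simp add: path_image_join Un_assoc)
  have box: "-2*\<i> \<in> box a1 a3" using assms by (auto simp: a1_def a3_def in_box_complex_iff)
  have sub: "path_image (rectpath a1 a3) \<subseteq> Sstrip - {-2*\<i>}"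
  proof -
    have "path_image (rectpath a1 a3) = cbox a1 a3 - box a1 a3"
      by (rule path_image_rectpath_cbox_minus_box[OF le])
    moreover have "cbox a1 a3 \<subseteq> Sstrip" using assms 
      by (auto simp: a1_def a3_def in_cbox_complex_iff Sstrip_def)
    ultimately show ?thesis using box by auto
  qed
  have "contour_integral (rectpath a1 a3) (Fk a) = 2 * pi * \<i> * (\<Sum>p\<in>{-2*\<i>}. winding_number (rectpath a1 a3) p * residue (Fk a) p)"
  proof (rule Residue_theorem[OF open_Sstrip connected_Sstrip _ Fk_holo])
    show "\<forall>z. z \<notin> Sstrip \<longrightarrow> winding_number (rectpath a1 a3) z = 0"
    proof (intro allI impI)
      fix z assume "z \<notin> Sstrip"
      hence "z \<notin> cbox a1 a3" using assms by (auto simp: a1_def a3_def in_cbox_complex_iff Sstrip_def)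
      thus "winding_number (rectpath a1 a3) z = 0" by (rule winding_number_rectpath_outside[OF le])
    qed
  qed (use sub in auto)
  also have "\<dots> = 2 * pi * \<i> * (- exp (2 * of_real a))"
    using winding_number_rectpath[OF box] Fk_residue[of a] by simp
  finally have main: "contour_integral (rectpath a1 a3) (Fk a) = 2 * pi * \<i> * (- exp (2 * of_real a))" .
  have ci: "Fk a contour_integrable_on linepath x y" if "closed_segment x y \<subseteq> Sstrip - {-2*\<i>}" for x y
    by (rule contour_integrable_continuous_linepath, rule continuous_on_subset[OF Fk_cont that])
  have c1: "Fk a contour_integrable_on linepath a1 a2" by (rule ci) (use sub pim in auto)
  have c2: "Fk a contour_integrable_on linepath a2 a3" by (rule ci) (use sub pim in auto)
  have c3: "Fk a contour_integrable_on linepath a3 a4" by (rule ci) (use sub pim in auto)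
  have c4: "Fk a contour_integrable_on linepath a4 a1" by (rule ci) (use sub pim in auto)
  have "contour_integral (rectpath a1 a3) (Fk a) = contour_integral (linepath a1 a2) (Fk a) + (contour_integral (linepath a2 a3) (Fk a)
       + (contour_integral (linepath a3 a4) (Fk a) + contour_integral (linepath a4 a1) (Fk a)))"
    unfolding rp using c1 c2 c3 c4 by (simp add: contour_integrable_joinI)
  thus ?thesis using main by (simp add: add.assoc)
qed


lemma hor:
  fixes R c :: real
  assumes "R > 0" "continuous_on (closed_segment (Complex (-R) c) (Complex R c)) f"
  shows "((\<lambda>u. f (Complex u c)) has_integral contour_integral (linepath (Complex (-R) c) (Complex R c)) f) {-R..R}"
proof -
  define A where "A = Complex (-R) c"
  define B where "B = Complex R c"
  define I where "I = contour_integral (linepath A B) f"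
  define g where "g w = f (w + Complex 0 c)" for w
  have "(f has_contour_integral I) (linepath A B)" unfolding I_def A_def B_def
    by (rule has_contour_integral_integral, rule contour_integrable_continuous_linepath, rule assms(2))
  hence "((\<lambda>x. f (linepath A B x) * (B - A)) has_integral I) {0..1}"
    by (simp add: has_contour_integral_linepath)
  moreover have "(\<lambda>x. f (linepath A B x) * (B - A)) = (\<lambda>x. g (linepath (of_real (-R)) (of_real R) x) * (of_real R - of_real (-R)))"
  proof (rule ext)
    fix x
    have "linepath A B x = linepath (of_real (-R)) (of_real R) x + Complex 0 c"
      by (simp add: A_def B_def linepath_def complex_eq_iff algebra_simps)
    moreover have "B - A = of_real R - of_real (-R)" by (simp add: A_def B_def complex_eq_iff)
    ultimately show "f (linepath A B x) * (B - A) = g (linepath (of_real (-R)) (of_real R) x) * (of_real R - of_real (-R))"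
      by (simp add: g_def)
  qed
  ultimately have "(g has_contour_integral I) (linepath (of_real (-R)) (of_real R))"
    by (simp add: has_contour_integral_linepath)
  hence "((\<lambda>x. g (of_real x)) has_integral I) {Re (of_real (-R))..Re (of_real R)}"
    using assms(1) by (subst (asm) has_contour_integral_linepath_Reals_iff) auto
  moreover have "(\<lambda>x. g (of_real x)) = (\<lambda>u. f (Complex u c))"
  proof (rule ext)
    fix x have "of_real x + Complex 0 c = Complex x c" by (simp add: complex_eq_iff)
    thus "g (of_real x) = f (Complex x c)" by (simp add: g_def)
  qed
  ultimately show ?thesis by (simp add: I_def A_def B_def)
qed


lemma Fk_norm: "norm (Fk a (Complex u y)) = exp (- a * y) * pi / norm (Dk (Complex u y))"
  by (simp add: Fk_def norm_divide norm_mult)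

lemma Dk_lower3: "norm (Dk (Complex u y)) \<ge> exp (pi * \<bar>u\<bar> / 2) * min (1/2) \<bar>sin (pi * y / 2)\<bar>"
proof (cases "exp (- (pi * \<bar>u\<bar> / 2)) \<le> exp (pi * \<bar>u\<bar> / 2) / 2")
  case True
  have "exp (pi * \<bar>u\<bar> / 2) * min (1/2) \<bar>sin (pi * y / 2)\<bar> \<le> exp (pi * \<bar>u\<bar> / 2) * (1/2)"
    by (intro mult_left_mono) auto
  also have "\<dots> \<le> exp (pi * \<bar>u\<bar> / 2) - exp (- (pi * \<bar>u\<bar> / 2))" using True by simp
  finally show ?thesis using Dk_lower1[of u y] by linarith
next
  case False
  have "exp (pi * \<bar>u\<bar> / 2) * min (1/2) \<bar>sin (pi * y / 2)\<bar> \<le> exp (pi * \<bar>u\<bar> / 2) * \<bar>sin (pi * y / 2)\<bar>"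
    by (intro mult_left_mono) auto
  thus ?thesis using Dk_lower2[of u y] by linarith
qed

definition msig :: "real \<Rightarrow> real" where "msig y = min (1/2) \<bar>sin (pi * y / 2)\<bar>"

lemma msig_pos: assumes "0 < \<sigma>" "\<sigma> < 2" shows "msig (-\<sigma>) > 0"
proof -
  have "sin (pi * \<sigma> / 2) > 0" using assms by (intro sin_gt_zero) auto
  thus ?thesis by (simp add: msig_def)
qed

lemma Fk_bound:
  assumes "0 < \<sigma>" "\<sigma> < 2"
  shows "norm (Fk a (Complex u (-\<sigma>))) \<le> exp (a * \<sigma>) * pi / msig (-\<sigma>) * exp (- (pi/2) * \<bar>u\<bar>)"
proof -
  have m: "msig (-\<sigma>) > 0" by (rule msig_pos[OF assms])
  have D: "norm (Dk (Complex u (-\<sigma>))) \<ge> exp (pi * \<bar>u\<bar> / 2) * msig (-\<sigma>)"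
    using Dk_lower3[of u "-\<sigma>"] by (simp add: msig_def)
  have Dp: "exp (pi * \<bar>u\<bar> / 2) * msig (-\<sigma>) > 0" using m by simp
  have "norm (Fk a (Complex u (-\<sigma>))) = exp (a * \<sigma>) * pi / norm (Dk (Complex u (-\<sigma>)))"
    by (simp add: Fk_norm)
  also have "\<dots> \<le> exp (a * \<sigma>) * pi / (exp (pi * \<bar>u\<bar> / 2) * msig (-\<sigma>))"
  proof -
    have Dpos: "norm (Dk (Complex u (-\<sigma>))) > 0" using D Dp by linarith
    show ?thesis by (rule divide_left_mono[OF D _ mult_pos_pos[OF Dpos Dp]]) simp
  qed
  also have "\<dots> = exp (a * \<sigma>) * pi / msig (-\<sigma>) * exp (- (pi/2) * \<bar>u\<bar>)"
    by (simp add: exp_minus field_simps)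
  finally show ?thesis .
qed

lemma expint_half:
  fixes c n :: real
  assumes "c > 0" "n \<ge> 0"
  shows "((\<lambda>x. exp (- c * \<bar>x\<bar>)) has_integral (1 - exp (- c * n)) / c) {0..n}"
proof -
  have "((\<lambda>x. exp (- c * x)) has_integral ((- exp (- c * n) / c) - (- exp (- c * 0) / c))) {0..n}"
    using assms by (intro fundamental_theorem_of_calculus[of 0 n "\<lambda>x. - exp (- c * x) / c" "\<lambda>x. exp (- c * x)"])
         (auto intro!: derivative_eq_intros simp flip: has_real_derivative_iff_has_vector_derivative)
  hence "((\<lambda>x. exp (- c * x)) has_integral (1 - exp (- c * n)) / c) {0..n}"
    by (simp add: diff_divide_distrib)
  thus ?thesis by (rule has_integral_eq[rotated]) auto
qed

lemma expint_sym:
  fixes c n :: real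
  assumes "c > 0" "n \<ge> 0"
  shows "((\<lambda>x. exp (- c * \<bar>x\<bar>)) has_integral 2 * ((1 - exp (- c * n)) / c)) {-n..n}"
proof -
  have h1: "((\<lambda>x. exp (- c * \<bar>x\<bar>)) has_integral (1 - exp (- c * n)) / c) {0..n}"
    by (rule expint_half[OF assms])
  have "((\<lambda>x. exp (- c * \<bar>-x\<bar>)) has_integral (1 - exp (- c * n)) / c) {-n..-0}"
    using has_integral_reflect_real[where f="\<lambda>x. exp (- c * \<bar>x\<bar>)", THEN iffD2, OF h1] .
  hence h2: "((\<lambda>x. exp (- c * \<bar>x\<bar>)) has_integral (1 - exp (- c * n)) / c) {-n..0}" by simp
  have "((\<lambda>x. exp (- c * \<bar>x\<bar>)) has_integral ((1 - exp (- c * n)) / c + (1 - exp (- c * n)) / c)) {-n..n}"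
    by (rule has_integral_combine[OF _ _ h2 h1]) (use assms in auto)
  thus ?thesis by simp
qed

lemma expint:
  fixes c :: real
  assumes "c > 0"
  shows "(\<lambda>x::real. exp (- c * \<bar>x\<bar>)) integrable_on UNIV"
proof -
  define f where "f n x = (if x \<in> {-real n..real n} then exp (- c * \<bar>x\<bar>) else 0)" for n x
  have hf: "(f n has_integral 2 * ((1 - exp (- c * real n)) / c)) UNIV" for n
    unfolding f_def by (subst has_integral_restrict_UNIV) (rule expint_sym[OF assms], simp)
  have "(\<lambda>x. exp (- c * \<bar>x\<bar>)) integrable_on UNIV \<and> (\<lambda>k. integral UNIV (f k)) \<longlonglongrightarrow> integral UNIV (\<lambda>x. exp (- c * \<bar>x\<bar>))"
  proof (intro monotone_convergence_increasing allI ballI)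
    fix n show "f n integrable_on UNIV" using hf by blast
  next
    fix n x show "f n x \<le> f (Suc n) x" by (auto simp: f_def)
  next
    fix x :: real
    have "eventually (\<lambda>n. real n \<ge> \<bar>x\<bar>) at_top"
      by (meson eventually_sequentiallyI nat_ceiling_le_eq)
    hence "eventually (\<lambda>n. f n x = exp (- c * \<bar>x\<bar>)) at_top"
      by (rule eventually_mono) (auto simp: f_def)
    thus "(\<lambda>n. f n x) \<longlonglongrightarrow> exp (- c * \<bar>x\<bar>)" by (simp add: tendsto_eventually)
  next
    have "norm (integral UNIV (f n)) \<le> 2 / c" for n
    proof -
      have "integral UNIV (f n) = 2 * ((1 - exp (- c * real n)) / c)" using hf by (rule integral_unique)
      moreover have e: "0 \<le> 1 - exp (- c * real n)" "1 - exp (- c * real n) \<le> 1" using assms by auto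
      moreover have "(1 - exp (- c * real n)) / c \<le> 1 / c" using e assms by (intro divide_right_mono) auto
      ultimately have "integral UNIV (f n) \<ge> 0" "integral UNIV (f n) \<le> 2 / c" using assms
        by (auto simp del: times_divide_eq_right simp add: times_divide_eq_right[symmetric])
      thus ?thesis by simp
    qed
    thus "bounded (range (\<lambda>k. integral UNIV (f k)))"
      by (metis (no_types, lifting) boundedI rangeE)
  qed
  thus ?thesis by blast
qed


lemma Fk_cont_on: "S \<subseteq> Sstrip - {-2*\<i>} \<Longrightarrow> continuous_on S (Fk a)"
  by (rule continuous_on_subset[OF Fk_cont])

lemma good_sub: "{z. -4 < Im z \<and> Im z < 0 \<and> (Re z \<noteq> 0 \<or> Im z \<noteq> -2)} \<subseteq> Sstrip - {-2*\<i>}"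
  by (auto simp: Sstrip_def)

definition BR :: "real \<Rightarrow> real \<Rightarrow> real" where
  "BR a R = exp (4 * \<bar>a\<bar>) * pi / (exp (pi * R / 2) - exp (- (pi * R / 2)))"

lemma vert_bound:
  assumes "R > 0" "\<bar>Re z\<bar> = R" "-4 \<le> Im z" "Im z \<le> 0"
  shows "norm (Fk a z) \<le> BR a R"
proof -
  have z: "z = Complex (Re z) (Im z)" by simp
  have n: "norm (Fk a z) = exp (- a * Im z) * pi / norm (Dk z)"
    by (subst (1 2) z, rule Fk_norm)
  have D: "norm (Dk z) \<ge> exp (pi * R / 2) - exp (- (pi * R / 2))"
    using Dk_lower1[of "Re z" "Im z"] assms by simp
  have Dp: "exp (pi * R / 2) - exp (- (pi * R / 2)) > 0" using assms by simp
  have e: "exp (- a * Im z) \<le> exp (4 * \<bar>a\<bar>)"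
  proof -
    have "- a * Im z \<le> \<bar>a\<bar> * \<bar>Im z\<bar>" by (metis abs_ge_self abs_minus_cancel abs_mult mult_minus_left)
    also have "\<dots> \<le> \<bar>a\<bar> * 4" using assms by (intro mult_left_mono) auto
    finally show ?thesis by simp
  qed
  have "exp (- a * Im z) * pi / norm (Dk z) \<le> exp (4 * \<bar>a\<bar>) * pi / norm (Dk z)"
    by (intro divide_right_mono mult_right_mono e) auto
  also have "\<dots> \<le> exp (4 * \<bar>a\<bar>) * pi / (exp (pi * R / 2) - exp (- (pi * R / 2)))"
  proof -
    have Dpos: "norm (Dk z) > 0" using D Dp by linarith
    show ?thesis by (rule divide_left_mono[OF D _ mult_pos_pos[OF Dpos Dp]]) simp
  qed
  finally show ?thesis using n by (simp add: BR_def)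
qed

lemma BR_lim: "((\<lambda>k::nat. BR a (real k)) \<longlongrightarrow> 0) sequentially"
proof -
  have "((\<lambda>R. BR a R) \<longlongrightarrow> 0) at_top" unfolding BR_def by real_asymp
  thus ?thesis by (rule filterlim_compose[OF _ filterlim_real_sequentially])
qed


lemma hseg: 
  assumes "-4 < c" "c < 0" "c \<noteq> -2"
  shows "closed_segment (Complex x c) (Complex y c) \<subseteq> Sstrip - {-2*\<i>}"
proof -
  have "closed_segment (Complex x c) (Complex y c) \<subseteq> {z. -4 < Im z \<and> Im z < 0 \<and> (Re z \<noteq> 0 \<or> Im z \<noteq> -2)}"
    using assms by (subst closed_segment_same_Im) auto
  thus ?thesis using good_sub by blast
qed

lemma vseg: 
  assumes "x \<noteq> 0" "-4 < c1" "c1 < 0" "-4 < c2" "c2 < 0"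
  shows "closed_segment (Complex x c1) (Complex x c2) \<subseteq> Sstrip - {-2*\<i>}"
proof -
  have "closed_segment (Complex x c1) (Complex x c2) \<subseteq> {z. -4 < Im z \<and> Im z < 0 \<and> (Re z \<noteq> 0 \<or> Im z \<noteq> -2)}"
    using assms by (subst closed_segment_same_Re) (auto simp: closed_segment_eq_real_ivl split: if_splits)
  thus ?thesis using good_sub by blast
qed

lemma vint_bound:
  assumes "R > 0" "\<bar>x\<bar> = R" "0 < \<sigma>" "\<sigma> < 2" "{c1, c2} = {-\<sigma>-2, -\<sigma>}"
  shows "norm (contour_integral (linepath (Complex x c1) (Complex x c2)) (Fk a)) \<le> BR a R * 2"
proof -
  have x0: "x \<noteq> 0" using assms by auto
  have cs: "-4 < c1" "c1 < 0" "-4 < c2" "c2 < 0" "\<bar>c2 - c1\<bar> = 2" using assms by (auto simp: doubleton_eq_iff)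
  have ci: "Fk a contour_integrable_on linepath (Complex x c1) (Complex x c2)"
    by (rule contour_integrable_continuous_linepath, rule Fk_cont_on, rule vseg[OF x0 cs(1-4)])
  have BRp: "BR a R \<ge> 0" using assms by (simp add: BR_def)
  have "norm (contour_integral (linepath (Complex x c1) (Complex x c2)) (Fk a)) \<le> BR a R * norm (Complex x c2 - Complex x c1)"
  proof (rule contour_integral_bound_linepath[OF ci BRp])
    fix z assume "z \<in> closed_segment (Complex x c1) (Complex x c2)"
    hence "Re z = x" "Im z \<in> closed_segment c1 c2" by (subst (asm) closed_segment_same_Re; simp)+
    hence "Re z = x" "-4 \<le> Im z" "Im z \<le> 0" using cs by (auto simp: closed_segment_eq_real_ivl split: if_splits)
    thus "norm (Fk a z) \<le> BR a R" using assms by (intro vert_bound) auto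
  qed
  also have "norm (Complex x c2 - Complex x c1) = 2" using cs by (simp add: cmod_def)
  finally show ?thesis .
qed


lemma K_lim:
  fixes \<sigma> a :: real
  assumes "0 < \<sigma>" "\<sigma> < 2"
  shows "(\<lambda>k::nat. contour_integral (linepath (Complex (-real k) (-\<sigma>)) (Complex (real k) (-\<sigma>))) (Fk a))
           \<longlonglongrightarrow> 2 * pi * \<i> * exp (2 * of_real a) / (1 + exp (2 * of_real a))"
proof -
  define E where "E = exp (2 * of_real a :: complex)"
  have E1: "1 + E \<noteq> 0"
  proof -
    have "E = exp (of_real (2 * a))" by (simp add: E_def)
    also have "\<dots> = of_real (exp (2 * a))" by (rule exp_of_real)
    finally have "E = of_real (exp (2 * a))" .
    hence "Re (1 + E) > 0" by (simp add: add_pos_pos)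
    thus ?thesis by (metis less_irrefl zero_complex.sel(1))
  qed
  define J where "J k = contour_integral (linepath (Complex (-real k) (-\<sigma>)) (Complex (real k) (-\<sigma>))) (Fk a)" for k :: nat
  define V where "V k = contour_integral (linepath (Complex (real k) (-\<sigma>-2)) (Complex (real k) (-\<sigma>))) (Fk a)
      + contour_integral (linepath (Complex (-real k) (-\<sigma>)) (Complex (-real k) (-\<sigma>-2))) (Fk a)" for k :: nat
  have key: "J k = (2 * pi * \<i> * E + V k) / (1 + E)" if "k \<ge> 1" for k
  proof -
    define R where "R = real k"
    have R: "R > 0" using that by (simp add: R_def)
    have s1: "closed_segment (Complex (-R) (-\<sigma>)) (Complex R (-\<sigma>)) \<subseteq> Sstrip - {-2*\<i>}"
      by (rule hseg) (use assms in auto)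
    have s2: "closed_segment (Complex (-R) (-\<sigma>-2)) (Complex R (-\<sigma>-2)) \<subseteq> Sstrip - {-2*\<i>}"
      by (rule hseg) (use assms in auto)
    have h1: "((\<lambda>u. Fk a (Complex u (-\<sigma>))) has_integral J k) {-R..R}"
      unfolding J_def R_def[symmetric] by (rule hor[OF R Fk_cont_on[OF s1]])
    have h2: "((\<lambda>u. Fk a (Complex u (-\<sigma>-2))) has_integral contour_integral (linepath (Complex (-R) (-\<sigma>-2)) (Complex R (-\<sigma>-2))) (Fk a)) {-R..R}"
      by (rule hor[OF R Fk_cont_on[OF s2]])
    have eqf: "Fk a (Complex u (-\<sigma>-2)) = - E * Fk a (Complex u (-\<sigma>))" for u
    proof -
      have "Complex u (-\<sigma>-2) = Complex u (-\<sigma>) - 2*\<i>" by (simp add: complex_eq_iff)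
      thus ?thesis by (simp add: Fk_shift E_def)
    qed
    have h3: "((\<lambda>u. Fk a (Complex u (-\<sigma>-2))) has_integral (- E * J k)) {-R..R}"
      unfolding eqf by (rule has_integral_mult_right[OF h1])
    have C1: "contour_integral (linepath (Complex (-R) (-\<sigma>-2)) (Complex R (-\<sigma>-2))) (Fk a) = - E * J k"
      using has_integral_unique[OF h2 h3] .
    have C3: "contour_integral (linepath (Complex R (-\<sigma>)) (Complex (-R) (-\<sigma>))) (Fk a) = - J k"
    proof -
      have "continuous_on (closed_segment (Complex R (-\<sigma>)) (Complex (-R) (-\<sigma>))) (Fk a)"
        using Fk_cont_on[OF s1] by (simp add: closed_segment_commute)
      thus ?thesis unfolding J_def R_def[symmetric] by (rule contour_integral_reverse_linepath)
    qed
    have rs: "contour_integral (linepath (Complex (-R) (-\<sigma>-2)) (Complex R (-\<sigma>-2))) (Fk a)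
       + contour_integral (linepath (Complex R (-\<sigma>-2)) (Complex R (-\<sigma>))) (Fk a)
       + contour_integral (linepath (Complex R (-\<sigma>)) (Complex (-R) (-\<sigma>))) (Fk a)
       + contour_integral (linepath (Complex (-R) (-\<sigma>)) (Complex (-R) (-\<sigma>-2))) (Fk a)
       = 2 * pi * \<i> * (- E)"
      using rect_sum[OF R assms, of a] by (simp add: E_def)
    hence "- E * J k - J k + V k = - 2 * pi * \<i> * E"
      unfolding C1 C3 by (simp add: V_def R_def algebra_simps)
    hence "J k * (1 + E) = 2 * pi * \<i> * E + V k" by (simp add: algebra_simps)
    thus ?thesis using E1 by (simp add: field_simps)
  qed
  have V0: "V \<longlonglongrightarrow> 0"
  proof (rule Lim_null_comparison)
    show "eventually (\<lambda>k. norm (V k) \<le> 4 * BR a (real k)) sequentially"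
    proof (rule eventually_sequentiallyI[of 1])
      fix k :: nat assume k: "k \<ge> 1"
      have R: "real k > 0" using k by simp
      have b1: "norm (contour_integral (linepath (Complex (real k) (-\<sigma>-2)) (Complex (real k) (-\<sigma>))) (Fk a)) \<le> BR a (real k) * 2"
        by (rule vint_bound[OF R _ assms]) auto
      have b2: "norm (contour_integral (linepath (Complex (-real k) (-\<sigma>)) (Complex (-real k) (-\<sigma>-2))) (Fk a)) \<le> BR a (real k) * 2"
        by (rule vint_bound[OF R _ assms]) auto
      have "norm (V k) \<le> norm (contour_integral (linepath (Complex (real k) (-\<sigma>-2)) (Complex (real k) (-\<sigma>))) (Fk a))
            + norm (contour_integral (linepath (Complex (-real k) (-\<sigma>)) (Complex (-real k) (-\<sigma>-2))) (Fk a))"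
        unfolding V_def by (rule norm_triangle_ineq)
      thus "norm (V k) \<le> 4 * BR a (real k)" using b1 b2 by linarith
    qed
    show "(\<lambda>k. 4 * BR a (real k)) \<longlonglongrightarrow> 0" using tendsto_mult_right_zero[OF BR_lim[of a], of 4] by simp
  qed
  have "(\<lambda>k. (2 * pi * \<i> * E + V k) / (1 + E)) \<longlonglongrightarrow> (2 * pi * \<i> * E + 0) / (1 + E)"
    by (intro tendsto_intros V0 E1)
  hence "(\<lambda>k. (2 * pi * \<i> * E + V k) / (1 + E)) \<longlonglongrightarrow> 2 * pi * \<i> * E / (1 + E)" by simp
  moreover have "eventually (\<lambda>k. (2 * pi * \<i> * E + V k) / (1 + E) = J k) sequentially"
    by (rule eventually_sequentiallyI[of 1]) (simp add: key)
  ultimately have "J \<longlonglongrightarrow> 2 * pi * \<i> * E / (1 + E)" by (rule Lim_transform_eventually)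
  thus ?thesis unfolding J_def[abs_def] E_def .
qed


definition Cs :: "real \<Rightarrow> real \<Rightarrow> real" where "Cs a \<sigma> = exp (a * \<sigma>) * pi / msig (-\<sigma>)"

lemma hint: "(\<lambda>u::real. Cs a \<sigma> * exp (- (pi/2) * \<bar>u\<bar>)) integrable_on UNIV"
proof -
  have "(\<lambda>u::real. exp (- (pi/2) * \<bar>u\<bar>) * Cs a \<sigma>) integrable_on UNIV"
    by (rule integrable_on_mult_left, rule expint) simp
  thus ?thesis by (simp add: mult.commute)
qed

lemma K:
  fixes \<sigma> a :: real
  assumes "0 < \<sigma>" "\<sigma> < 2"
  shows "((\<lambda>u. Fk a (Complex u (-\<sigma>))) has_integral 2 * pi * \<i> * exp (2 * of_real a) / (1 + exp (2 * of_real a))) UNIV"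
proof -
  define J where "J k = contour_integral (linepath (Complex (-real k) (-\<sigma>)) (Complex (real k) (-\<sigma>))) (Fk a)" for k :: nat
  define L where "L = 2 * pi * \<i> * exp (2 * of_real a) / (1 + exp (2 * of_real a))"
  define f where "f k u = (if u \<in> {-real (Suc k)..real (Suc k)} then Fk a (Complex u (-\<sigma>)) else 0)" for k :: nat and u
  have hf: "(f k has_integral J (Suc k)) UNIV" for k
  proof -
    have R: "real (Suc k) > 0" by simp
    have s1: "closed_segment (Complex (-real (Suc k)) (-\<sigma>)) (Complex (real (Suc k)) (-\<sigma>)) \<subseteq> Sstrip - {-2*\<i>}"
      by (rule hseg) (use assms in auto)
    have "((\<lambda>u. Fk a (Complex u (-\<sigma>))) has_integral J (Suc k)) {-real (Suc k)..real (Suc k)}"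
      unfolding J_def by (rule hor[OF R Fk_cont_on[OF s1]])
    thus ?thesis unfolding f_def by (subst has_integral_restrict_UNIV)
  qed
  have d1: "f k integrable_on UNIV" for k using hf by blast
  have d2: "(\<lambda>u. Cs a \<sigma> * exp (- (pi/2) * \<bar>u\<bar>)) integrable_on UNIV" by (rule hint)
  have d3: "norm (f k u) \<le> Cs a \<sigma> * exp (- (pi/2) * \<bar>u\<bar>)" if "u \<in> UNIV" for k u
    proof -
      have c0: "Cs a \<sigma> * exp (- (pi/2) * \<bar>u\<bar>) \<ge> 0" using msig_pos[OF assms] by (simp add: Cs_def)
      have b: "norm (Fk a (Complex u (-\<sigma>))) \<le> Cs a \<sigma> * exp (- (pi/2) * \<bar>u\<bar>)"
        using Fk_bound[OF assms, of a u] unfolding Cs_def .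
      show ?thesis unfolding f_def using b c0 by (cases "u \<in> {-real (Suc k)..real (Suc k)}") (simp_all only: if_True if_False norm_zero)
    qed
  have d4: "(\<lambda>k. f k u) \<longlonglongrightarrow> Fk a (Complex u (-\<sigma>))" if "u \<in> UNIV" for u
    proof -
      have "eventually (\<lambda>k. real k \<ge> \<bar>u\<bar>) at_top"
        by (meson eventually_sequentiallyI nat_ceiling_le_eq)
      hence "eventually (\<lambda>k. f k u = Fk a (Complex u (-\<sigma>))) at_top"
        by (rule eventually_mono) (auto simp: f_def)
      thus ?thesis by (simp add: tendsto_eventually)
    qed
  note dc = dominated_convergence[of f UNIV "\<lambda>u. Cs a \<sigma> * exp (- (pi/2) * \<bar>u\<bar>)" "\<lambda>u. Fk a (Complex u (-\<sigma>))", OF d1 d2 d3 d4]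
  have "(\<lambda>k. J (Suc k)) \<longlonglongrightarrow> L"
    using LIMSEQ_Suc[OF K_lim[OF assms, of a]] unfolding J_def L_def .
  moreover have "(\<lambda>k. integral UNIV (f k)) = (\<lambda>k. J (Suc k))"
    using hf by (intro ext integral_unique)
  ultimately have "(\<lambda>k. integral UNIV (f k)) \<longlonglongrightarrow> L" by simp
  hence I: "integral UNIV (\<lambda>u. Fk a (Complex u (-\<sigma>))) = L"
    using dc by (intro LIMSEQ_unique) auto
  have "((\<lambda>u. Fk a (Complex u (-\<sigma>))) has_integral integral UNIV (\<lambda>u. Fk a (Complex u (-\<sigma>)))) UNIV"
    using dc by (intro integrable_integral) auto
  thus ?thesis unfolding I L_def .
qed



lemma cpow_nat: "(of_nat (Suc n) :: complex) powr s = exp (s * of_real (ln (real (Suc n))))"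
proof -
  have "ln (of_nat (Suc n) :: complex) = of_real (ln (real (Suc n)))"
    using Ln_of_nat[of "Suc n"] by simp
  moreover have "(of_nat (Suc n) :: complex) \<noteq> 0" by (rule of_nat_neq_0)
  ultimately show ?thesis unfolding powr_def by (simp only: if_False)
qed

lemma term_eq:
  fixes t L :: real and x :: complex and n :: nat
  defines "m \<equiv> real (Suc n)"
  shows "exp (\<i> * x / 2 * of_real L) * (1 / (of_nat (Suc n)) powr (1/2 + \<i> * (of_real t + x)))
           * (of_real pi / (2 * sinh (of_real pi * x / 2)))
       = (1 / (of_nat (Suc n)) powr (1/2 + \<i> * of_real t)) * Fk (L/2 - ln m) x"
proof -
  have s: "of_real pi / (2 * sinh (of_real pi * x / 2)) = of_real pi / Dk x"
  proof -
    have "2 * sinh (of_real pi * x / 2) = Dk x" by (simp add: sinh_field_def Dk_def)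
    thus ?thesis by simp
  qed
  have e: "exp (\<i> * x / 2 * of_real L) * exp (- ((1/2 + \<i> * (of_real t + x)) * of_real (ln m)))
      = exp (- ((1/2 + \<i> * of_real t) * of_real (ln m))) * exp (\<i> * of_real (L/2 - ln m) * x)"
  proof -
    have "\<i> * x / 2 * of_real L + (- ((1/2 + \<i> * (of_real t + x)) * of_real (ln m)))
        = (- ((1/2 + \<i> * of_real t) * of_real (ln m))) + \<i> * of_real (L/2 - ln m) * x"
      by (simp add: algebra_simps)
    thus ?thesis by (simp only: exp_add[symmetric])
  qed
  define A where "A = exp (\<i> * x / 2 * of_real L)"
  define P where "P = exp ((1/2 + \<i> * (of_real t + x)) * of_real (ln m))"
  define Q where "Q = exp ((1/2 + \<i> * of_real t) * of_real (ln m))"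
  define R where "R = exp (\<i> * of_real (L/2 - ln m) * x)"
  have e': "A * inverse P = inverse Q * R" using e unfolding A_def P_def Q_def R_def exp_minus .
  have "exp (\<i> * x / 2 * of_real L) * (1 / (of_nat (Suc n)) powr (1/2 + \<i> * (of_real t + x)))
           * (of_real pi / (2 * sinh (of_real pi * x / 2))) = (A * inverse P) * (of_real pi / Dk x)"
    unfolding s cpow_nat m_def[symmetric] A_def P_def by (simp only: divide_inverse mult_1_left)
  also have "\<dots> = (inverse Q * R) * (of_real pi / Dk x)" by (simp only: e')
  also have "\<dots> = (1 / (of_nat (Suc n)) powr (1/2 + \<i> * of_real t)) * Fk (L/2 - ln m) x"
    unfolding Fk_def cpow_nat m_def[symmetric] Q_def R_def by (simp only: divide_inverse mult_1 mult.assoc)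
  finally show ?thesis .
qed


lemma norm_inv_cpow:
  "norm (1 / (of_nat (Suc n) :: complex) powr s) = real (Suc n) powr (- Re s)"
proof -
  have "norm (1 / (of_nat (Suc n) :: complex) powr s) = 1 / exp (Re s * ln (real (Suc n)))"
    unfolding cpow_nat by (simp add: norm_divide)
  also have "\<dots> = real (Suc n) powr (- Re s)"
    by (simp add: powr_def exp_minus field_simps)
  finally show ?thesis .
qed

lemma summable_zeta_terms:
  assumes "Re s > 1"
  shows "summable (\<lambda>n. 1 / (of_nat (Suc n) :: complex) powr s)"
proof (rule summable_norm_cancel)
  have "summable (\<lambda>n. real n powr (- Re s))" using assms by (subst summable_real_powr_iff) simp
  hence "summable (\<lambda>n. real (Suc n) powr (- Re s))" 
    using summable_Suc_iff[of "\<lambda>n. real n powr (- Re s)"] by simp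
  thus "summable (\<lambda>n. norm (1 / (of_nat (Suc n) :: complex) powr s))" by (simp only: norm_inv_cpow)
qed

lemma G_sums:
  fixes t u \<sigma> :: real
  assumes "\<sigma> > 1/2"
  shows "(\<lambda>n. (1 / (of_nat (Suc n)) powr (1/2 + \<i> * of_real t)) * Fk (ln (t / (2 * pi)) / 2 - ln (real (Suc n))) (Complex u (-\<sigma>)))
            sums G_integrand t (Complex u (-\<sigma>))"
proof -
  define x where "x = Complex u (-\<sigma>)"
  define s where "s = 1/2 + \<i> * (of_real t + x)"
  define L where "L = ln (t / (2 * pi))"
  have Res: "Re s = 1/2 + \<sigma>" by (simp add: s_def x_def)
  have "(\<lambda>n. 1 / (of_nat (Suc n) :: complex) powr s) sums riemann_zeta s"
    unfolding riemann_zeta_def by (rule summable_sums, rule summable_zeta_terms) (use Res assms in simp)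
  hence "(\<lambda>n. exp (\<i> * x / 2 * of_real L) * (1 / (of_nat (Suc n)) powr s)) sums (exp (\<i> * x / 2 * of_real L) * riemann_zeta s)"
    by (rule sums_mult)
  hence "(\<lambda>n. exp (\<i> * x / 2 * of_real L) * (1 / (of_nat (Suc n)) powr s) * (of_real pi / (2 * sinh (of_real pi * x / 2))))
           sums (exp (\<i> * x / 2 * of_real L) * riemann_zeta s * (of_real pi / (2 * sinh (of_real pi * x / 2))))"
    by (rule sums_mult2)
  thus ?thesis unfolding s_def term_eq G_integrand_def x_def[symmetric] L_def .
qed


theorem mainTheorem8:
  fixes t \<sigma> :: real
  assumes "t > 0" and "1/2 < \<sigma>" and "\<sigma> < 2"
  shows "((\<lambda>u::real. G_integrand t (of_real u - \<i> * of_real \<sigma>) / (2 * of_real pi * \<i>))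
            has_integral
          (\<Sum>n. (1 / (of_nat (Suc n)) powr (1/2 + \<i> * of_real t))
                 * of_real (t / (2 * pi * (real (Suc n))^2 + t)))) UNIV"
proof -
  have s0: "0 < \<sigma>" using assms by simp
  define L where "L = ln (t / (2 * pi))"
  define m where "m n = real (Suc n)" for n
  define a where "a n = L / 2 - ln (m n)" for n
  define c where "c n = 1 / (of_nat (Suc n)) powr (1/2 + \<i> * of_real t)" for n
  define T where "T n = c n * of_real (t / (2 * pi * (real (Suc n))^2 + t))" for n
  define g where "g u = G_integrand t (of_real u - \<i> * of_real \<sigma>) / (2 * of_real pi * \<i>)" for u
  define W where "W = (\<Sum>n. norm (c n) * Cs (a n) \<sigma>)"
  define f where "f N u = (\<Sum>n<N. c n / (2 * of_real pi * \<i>) * Fk (a n) (Complex u (-\<sigma>)))" for N u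
  have zu: "of_real u - \<i> * of_real \<sigma> = Complex u (-\<sigma>)" for u by (simp add: complex_eq_iff)
  have mpos: "m n > 0" for n by (simp add: m_def)
  have nc: "norm (c n) = m n powr (- 1/2)" for n
    unfolding c_def m_def by (subst norm_inv_cpow) simp
  have Cs_eq: "Cs (a n) \<sigma> = exp (L * \<sigma> / 2) * pi / msig (-\<sigma>) * m n powr (- \<sigma>)" for n
  proof -
    have "exp (a n * \<sigma>) = exp (L * \<sigma> / 2) * exp (- \<sigma> * ln (m n))"
      by (simp add: a_def algebra_simps flip: exp_add)
    also have "exp (- \<sigma> * ln (m n)) = m n powr (- \<sigma>)" using mpos[of n] by (simp add: powr_def)
    finally show ?thesis by (simp add: Cs_def)
  qed
  have summ: "summable (\<lambda>n. norm (c n) * Cs (a n) \<sigma>)"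
  proof -
    have "summable (\<lambda>n. real n powr (- 1/2 - \<sigma>))" using assms by (subst summable_real_powr_iff) simp
    hence "summable (\<lambda>n. m n powr (- 1/2 - \<sigma>))"
      using summable_Suc_iff[of "\<lambda>n. real n powr (- 1/2 - \<sigma>)"] by (simp add: m_def)
    hence "summable (\<lambda>n. exp (L * \<sigma> / 2) * pi / msig (-\<sigma>) * m n powr (- 1/2 - \<sigma>))"
      by (rule summable_mult)
    moreover have "norm (c n) * Cs (a n) \<sigma> = exp (L * \<sigma> / 2) * pi / msig (-\<sigma>) * m n powr (- 1/2 - \<sigma>)" for n
    proof -
      have "m n powr (- 1/2 - \<sigma>) = m n powr (- 1/2) * m n powr (- \<sigma>)"
        by (simp add: powr_add[symmetric])
      thus ?thesis unfolding nc Cs_eq by simp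
    qed
    ultimately show ?thesis by simp
  qed
  have Cs0: "Cs (a n) \<sigma> \<ge> 0" for n using msig_pos[OF s0 assms(3)] by (simp add: Cs_def)
  have Tn: "c n / (2 * of_real pi * \<i>) * (2 * pi * \<i> * exp (2 * of_real (a n)) / (1 + exp (2 * of_real (a n)))) = T n" for n
  proof -
    have e: "exp (2 * a n) = t / (2 * pi) / (m n)^2"
    proof -
      have "exp (2 * a n) = exp L / exp (ln (m n)) ^ 2"
        by (simp add: a_def exp_diff flip: exp_of_nat_mult)
      also have "\<dots> = t / (2 * pi) / (m n)^2" using assms(1) mpos by (simp add: L_def)
      finally show ?thesis .
    qed
    have E: "exp (2 * of_real (a n) :: complex) = of_real (exp (2 * a n))"
    proof -
      have "exp (2 * of_real (a n) :: complex) = exp (of_real (2 * a n))" by simp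
      also have "\<dots> = of_real (exp (2 * a n))" by (rule exp_of_real)
      finally show ?thesis .
    qed
    have r: "exp (2 * a n) / (1 + exp (2 * a n)) = t / (2 * pi * (real (Suc n))^2 + t)"
      unfolding e using assms(1) mpos[of n] by (simp add: field_simps m_def)
    have "c n / (2 * of_real pi * \<i>) * (2 * pi * \<i> * exp (2 * of_real (a n)) / (1 + exp (2 * of_real (a n))))
        = c n * (exp (2 * of_real (a n)) / (1 + exp (2 * of_real (a n))))"
      by (simp add: field_simps)
    also have "exp (2 * of_real (a n)) / (1 + exp (2 * of_real (a n))) = (of_real (exp (2 * a n) / (1 + exp (2 * a n))) :: complex)"
      unfolding E by simp
    finally show ?thesis unfolding r T_def .
  qed
  have hf: "(f N has_integral (\<Sum>n<N. T n)) UNIV" for N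
    unfolding f_def
  proof (rule has_integral_sum)
    fix n assume "n \<in> {..<N}"
    show "((\<lambda>u. c n / (2 * of_real pi * \<i>) * Fk (a n) (Complex u (-\<sigma>))) has_integral T n) UNIV"
      unfolding Tn[symmetric] by (rule has_integral_mult_right, rule K[OF s0 assms(3)])
  qed simp
  have d1: "f N integrable_on UNIV" for N using hf by blast
  have d2: "(\<lambda>u. W / (2 * pi) * exp (- (pi/2) * \<bar>u\<bar>)) integrable_on UNIV"
  proof -
    have "(\<lambda>u::real. exp (- (pi/2) * \<bar>u\<bar>) * (W / (2 * pi))) integrable_on UNIV"
      by (rule integrable_on_mult_left, rule expint) simp
    thus ?thesis by (simp add: mult.commute)
  qed
  have d3: "norm (f N u) \<le> W / (2 * pi) * exp (- (pi/2) * \<bar>u\<bar>)" if "u \<in> UNIV" for N u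
  proof -
    have "norm (f N u) \<le> (\<Sum>n<N. norm (c n / (2 * of_real pi * \<i>) * Fk (a n) (Complex u (-\<sigma>))))"
      unfolding f_def by (rule norm_sum)
    also have "\<dots> \<le> (\<Sum>n<N. norm (c n) * Cs (a n) \<sigma> * (exp (- (pi/2) * \<bar>u\<bar>) / (2 * pi)))"
    proof (rule sum_mono)
      fix n
      have "norm (c n / (2 * of_real pi * \<i>) * Fk (a n) (Complex u (-\<sigma>))) = norm (c n) / (2 * pi) * norm (Fk (a n) (Complex u (-\<sigma>)))"
        by (simp add: norm_mult norm_divide)
      also have "\<dots> \<le> norm (c n) / (2 * pi) * (Cs (a n) \<sigma> * exp (- (pi/2) * \<bar>u\<bar>))"
        using Fk_bound[OF s0 assms(3), of "a n" u] by (intro mult_left_mono) (auto simp: Cs_def)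
      finally show "norm (c n / (2 * of_real pi * \<i>) * Fk (a n) (Complex u (-\<sigma>))) \<le> norm (c n) * Cs (a n) \<sigma> * (exp (- (pi/2) * \<bar>u\<bar>) / (2 * pi))"
        by (simp add: field_simps)
    qed
    also have "\<dots> = (\<Sum>n<N. norm (c n) * Cs (a n) \<sigma>) * (exp (- (pi/2) * \<bar>u\<bar>) / (2 * pi))"
      by (rule sum_distrib_right[symmetric])
    also have "\<dots> \<le> W * (exp (- (pi/2) * \<bar>u\<bar>) / (2 * pi))"
      unfolding W_def by (intro mult_right_mono sum_le_suminf summ) (auto intro!: mult_nonneg_nonneg Cs0)
    finally show ?thesis by simp
  qed
  have d4: "(\<lambda>N. f N u) \<longlonglongrightarrow> g u" if "u \<in> UNIV" for u
  proof -
    have "(\<lambda>n. c n * Fk (a n) (Complex u (-\<sigma>))) sums G_integrand t (Complex u (-\<sigma>))"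
      using G_sums[OF assms(2), of t u] unfolding c_def a_def m_def L_def .
    hence "(\<lambda>n. c n * Fk (a n) (Complex u (-\<sigma>)) / (2 * of_real pi * \<i>)) sums (G_integrand t (Complex u (-\<sigma>)) / (2 * of_real pi * \<i>))"
      by (rule sums_divide)
    hence "(\<lambda>n. c n / (2 * of_real pi * \<i>) * Fk (a n) (Complex u (-\<sigma>))) sums g u"
      unfolding g_def zu by (simp add: field_simps)
    thus ?thesis unfolding sums_def f_def .
  qed
  note dc = dominated_convergence[of f UNIV "\<lambda>u. W / (2 * pi) * exp (- (pi/2) * \<bar>u\<bar>)" g, OF d1 d2 d3 d4]
  have "(\<lambda>N. integral UNIV (f N)) = (\<lambda>N. \<Sum>n<N. T n)" using hf by (intro ext integral_unique)
  hence "(\<lambda>N. \<Sum>n<N. T n) \<longlonglongrightarrow> integral UNIV g" using dc(2) by simp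
  hence "T sums integral UNIV g" unfolding sums_def .
  hence "suminf T = integral UNIV g" by (rule sums_unique[symmetric])
  moreover have "(g has_integral integral UNIV g) UNIV" using dc(1) by (rule integrable_integral)
  ultimately have "(g has_integral suminf T) UNIV" by simp
  thus ?thesis unfolding g_def T_def c_def .
qed


end
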